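(* Let $P$ be an algebraic $L$-dcpo. Then $\Sigma_LP=(P,\sigma_L(P))$ is a strong locally super-compact $L$-topological space.
   Context: $L$ is a frame with implication $\to$. $L$-subsets: maps to $L$; nonempty: $\bigvee A=1$; ${\rm sub}_X(A,B)=\bigwedge_xA(x)\to B(x)$. $L$-topology: $\mathcal O(X)\subseteq L^X$ closed under finite meets and arbitrary joins containing constants. Base: $\mathcal B\subseteq\mathcal O(X)$ with $A=\bigvee_{B\in\mathcal B}{\rm sub}_X(B,A)\wedge B$ for each open $A$. Super-compact: nonempty $A$ with ${\rm sub}_X(A,\bigvee_iV_i)=\bigvee_i{\rm sub}_X(A,V_i)$ for all families of open $V_i$. Strong locally super-compact: has a base of super-compact open sets. $L$-order $e$ on $P$: $e(x,x)=1$, $e(x,y)\wedge e(y,z)\le e(x,z)$, $e(x,y)\wedge e(y,x)=1\Rightarrow x=y$. ${\downarrow}y(x)=e(x,y)$; $\sqcup A=x$ iff $e(x,y)={\rm sub}_P(A,{\downarrow}y)$ for all $y$; directed: nonempty with $D(x)\wedge D(y)\le\bigvee_zD(z)\wedge e(x,z)\wedge e(y,z)$; ideal: directed lower set; $L$-dcpo: every directed $L$-subset has a supremum. ${\Downarrow}x(y)=\bigwedge\{e(x,\sqcup I)\to I(y):I\text{ ideal with a supremum}\}$. Compact: ${\Downarrow}x(x)=1$; $K(P)$ the set of compact elements; $k(x)(y)=e(y,x)$ if $y\in K(P)$, else $0$; algebraic $L$-dcpo: $L$-dcpo with every $k(x)$ directed and $\sqcup k(x)=x$. $\sigma_L(P)$: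 upper sets $A$ ($A(x)\wedge e(x,y)\le A(y)$) with $A(\sqcup D)=\bigvee_xA(x)\wedge D(x)$ for every directed $D$. *)

theory Defs
  imports Main
begin

definition frame_law :: "'l::complete_lattice itself \<Rightarrow> bool" where
  "frame_law _ \<longleftrightarrow> (\<forall>(a::'l) S. inf a (Sup S) = Sup ((\<lambda>s. inf a s) ` S))"

text \<open>Heyting implication (right adjoint of meet).\<close>
definition limp :: "'l::complete_lattice \<Rightarrow> 'l \<Rightarrow> 'l" where
  "limp a b = Sup {c. inf c a \<le> b}"

definition lsub :: "('a \<Rightarrow> 'l::complete_lattice) \<Rightarrow> ('a \<Rightarrow> 'l) \<Rightarrow> 'l" where
  "lsub A B = (INF x. limp (A x) (B x))"

definition lnonempty :: "('a \<Rightarrow> 'l::complete_lattice) \<Rightarrow> bool" where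
  "lnonempty A \<longleftrightarrow> (SUP x. A x) = top"

definition is_L_topology :: "('a \<Rightarrow> 'l::complete_lattice) set \<Rightarrow> bool" where
  "is_L_topology T \<longleftrightarrow>
     (\<forall>A\<in>T. \<forall>B\<in>T. inf A B \<in> T) \<and>
     (\<forall>S. S \<subseteq> T \<longrightarrow> Sup S \<in> T) \<and>
     (\<forall>c. (\<lambda>_. c) \<in> T)"

definition is_L_base :: "('a \<Rightarrow> 'l::complete_lattice) set \<Rightarrow> ('a \<Rightarrow> 'l) set \<Rightarrow> bool" where
  "is_L_base T B \<longleftrightarrow> B \<subseteq> T \<and>
     (\<forall>A\<in>T. A = (SUP V\<in>B. (\<lambda>x. inf (lsub V A) (V x))))"

definition super_compact :: "('a \<Rightarrow> 'l::complete_lattice) set \<Rightarrow> ('a \<Rightarrow> 'l) \<Rightarrow> bool" where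
  "super_compact T A \<longleftrightarrow> lnonempty A \<and>
     (\<forall>(I::('a \<Rightarrow> 'l) set). I \<subseteq> T \<longrightarrow> lsub A (Sup I) = (SUP V\<in>I. lsub A V))"

definition strong_locally_super_compact :: "('a \<Rightarrow> 'l::complete_lattice) set \<Rightarrow> bool" where
  "strong_locally_super_compact T \<longleftrightarrow>
     (\<exists>B. is_L_base T B \<and> (\<forall>V\<in>B. super_compact T V))"

definition L_order :: "('a \<Rightarrow> 'a \<Rightarrow> 'l::complete_lattice) \<Rightarrow> bool" where
  "L_order e \<longleftrightarrow> (\<forall>x. e x x = top) \<and> (\<forall>x y z. inf (e x y) (e y z) \<le> e x z) \<and>
     (\<forall>x y. inf (e x y) (e y x) = top \<longrightarrow> x = y)"

definition ldown :: "('a \<Rightarrow> 'a \<Rightarrow> 'l::complete_lattice) \<Rightarrow> 'a \<Rightarrow> 'a \<Rightarrow> 'l" where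
  "ldown e y = (\<lambda>x. e x y)"

definition is_lsup :: "('a \<Rightarrow> 'a \<Rightarrow> 'l::complete_lattice) \<Rightarrow> ('a \<Rightarrow> 'l) \<Rightarrow> 'a \<Rightarrow> bool" where
  "is_lsup e A x \<longleftrightarrow> (\<forall>y. e x y = lsub A (ldown e y))"

definition lsup :: "('a \<Rightarrow> 'a \<Rightarrow> 'l::complete_lattice) \<Rightarrow> ('a \<Rightarrow> 'l) \<Rightarrow> 'a" where
  "lsup e A = (THE x. is_lsup e A x)"

definition ldirected :: "('a \<Rightarrow> 'a \<Rightarrow> 'l::complete_lattice) \<Rightarrow> ('a \<Rightarrow> 'l) \<Rightarrow> bool" where
  "ldirected e D \<longleftrightarrow> lnonempty D \<and>
     (\<forall>x y. inf (D x) (D y) \<le> (SUP z. inf (inf (D z) (e x z)) (e y z)))"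

definition llower :: "('a \<Rightarrow> 'a \<Rightarrow> 'l::complete_lattice) \<Rightarrow> ('a \<Rightarrow> 'l) \<Rightarrow> bool" where
  "llower e A \<longleftrightarrow> (\<forall>x y. inf (A x) (e y x) \<le> A y)"

definition lideal :: "('a \<Rightarrow> 'a \<Rightarrow> 'l::complete_lattice) \<Rightarrow> ('a \<Rightarrow> 'l) \<Rightarrow> bool" where
  "lideal e I \<longleftrightarrow> ldirected e I \<and> llower e I"

definition L_dcpo :: "('a \<Rightarrow> 'a \<Rightarrow> 'l::complete_lattice) \<Rightarrow> bool" where
  "L_dcpo e \<longleftrightarrow> L_order e \<and> (\<forall>D. ldirected e D \<longrightarrow> (\<exists>x. is_lsup e D x))"

definition way_below :: "('a \<Rightarrow> 'a \<Rightarrow> 'l::complete_lattice) \<Rightarrow> 'a \<Rightarrow> 'a \<Rightarrow> 'l" where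
  "way_below e x y = Inf {limp (e x (lsup e I)) (I y) | I. lideal e I \<and> (\<exists>s. is_lsup e I s)}"

definition lcompact :: "('a \<Rightarrow> 'a \<Rightarrow> 'l::complete_lattice) \<Rightarrow> 'a \<Rightarrow> bool" where
  "lcompact e x \<longleftrightarrow> way_below e x x = top"

definition kset :: "('a \<Rightarrow> 'a \<Rightarrow> 'l::complete_lattice) \<Rightarrow> 'a \<Rightarrow> 'a \<Rightarrow> 'l" where
  "kset e x = (\<lambda>y. if lcompact e y then e y x else bot)"

definition algebraic_L_dcpo :: "('a \<Rightarrow> 'a \<Rightarrow> 'l::complete_lattice) \<Rightarrow> bool" where
  "algebraic_L_dcpo e \<longleftrightarrow> L_dcpo e \<and> (\<forall>x. ldirected e (kset e x) \<and> is_lsup e (kset e x) x)"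

definition sigma_L :: "('a \<Rightarrow> 'a \<Rightarrow> 'l::complete_lattice) \<Rightarrow> ('a \<Rightarrow> 'l) set" where
  "sigma_L e = {A. (\<forall>x y. inf (A x) (e x y) \<le> A y) \<and>
                  (\<forall>D. ldirected e D \<longrightarrow> A (lsup e D) = (SUP x. inf (A x) (D x)))}"

end

theory Submission
  imports Defs
begin

lemma fl_dist:
  assumes F: "frame_law TYPE('l::complete_lattice)"
  shows "inf (a::'l) (SUP i\<in>I. f i) = (SUP i\<in>I. inf a (f i))"
proof -
  have "inf a (Sup (f ` I)) = Sup ((\<lambda>s. inf a s) ` (f ` I))"
    using F unfolding frame_law_def by blast
  then show ?thesis by (simp add: image_image)
qed

lemma fl_dist2:
  assumes F: "frame_law TYPE('l::complete_lattice)"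
  shows "inf (SUP i\<in>I. f i) (a::'l) = (SUP i\<in>I. inf (f i) a)"
  using fl_dist[OF F, of a f I] by (simp add: inf_commute)

lemma limp_iff:
  assumes F: "frame_law TYPE('l::complete_lattice)"
  shows "((c::'l) \<le> limp a b) = (inf c a \<le> b)"
proof
  assume h: "c \<le> limp a b"
  have "inf (limp a b) a = (SUP s\<in>{c. inf c a \<le> b}. inf s a)"
    unfolding limp_def using fl_dist2[OF F, of id "{c. inf c a \<le> b}" a] by simp
  also have "\<dots> \<le> b" by (rule SUP_least) auto
  finally show "inf c a \<le> b" using h by (meson inf_mono order_refl order_trans)
next
  assume "inf c a \<le> b"
  then show "c \<le> limp a b" unfolding limp_def by (rule Sup_upper[OF CollectI])
qed

lemma lsub_ge:
  assumes F: "frame_law TYPE('l::complete_lattice)"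
  shows "((c::'l) \<le> lsub A B) = (\<forall>x. inf c (A x) \<le> B x)"
  unfolding lsub_def by (simp add: le_INF_iff limp_iff[OF F])

lemma lsub_le:
  assumes F: "frame_law TYPE('l::complete_lattice)"
  shows "inf (lsub A B) (A x) \<le> (B x::'l)"
  using lsub_ge[OF F, of "lsub A B" A B] by simp

lemma ord_refl: "L_order e \<Longrightarrow> e x x = top"
  unfolding L_order_def by blast
lemma ord_trans: "L_order e \<Longrightarrow> inf (e x y) (e y z) \<le> e x z"
  unfolding L_order_def by blast
lemma ord_antisym: "L_order e \<Longrightarrow> inf (e x y) (e y x) = top \<Longrightarrow> x = y"
  unfolding L_order_def by blast

lemma lsup_le:
  assumes F: "frame_law TYPE('l::complete_lattice)" and O: "L_order (e::'a\<Rightarrow>'a\<Rightarrow>'l)"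
    and S: "is_lsup e D s"
  shows "D x \<le> e x s"
proof -
  have "top = lsub D (ldown e s)" using S O unfolding is_lsup_def by (metis ord_refl)
  then show ?thesis using lsub_le[OF F, of D "ldown e s" x] by (simp add: ldown_def)
qed

lemma lsup_eq:
  assumes O: "L_order e" and S: "is_lsup e D s"
  shows "lsup e D = s"
  unfolding lsup_def
proof (rule the_equality)
  show "is_lsup e D s" by (rule S)
  fix t assume T: "is_lsup e D t"
  have "e s t = e t t" using S T unfolding is_lsup_def by metis
  moreover have "e t s = e s s" using S T unfolding is_lsup_def by metis
  ultimately have "inf (e t s) (e s t) = top" using O by (simp add: ord_refl)
  then show "t = s" using O ord_antisym by metis
qed

lemma dir_lsup:
  assumes D: "L_dcpo e" and "ldirected e D"
  obtains s where "is_lsup e D s" "lsup e D = s"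
  using assms lsup_eq unfolding L_dcpo_def by metis



lemma nonempty_top: "lnonempty D \<Longrightarrow> (SUP x. D x) = top"
  unfolding lnonempty_def by simp

lemma sigma_const:
  assumes F: "frame_law TYPE('l::complete_lattice)"
  shows "(\<lambda>_. c::'l) \<in> sigma_L (e::'a\<Rightarrow>'a\<Rightarrow>'l)"
  unfolding sigma_L_def
proof (safe)
  fix D assume "ldirected e D"
  then have "(SUP x. D x) = top" unfolding ldirected_def by (simp add: nonempty_top)
  then have "c = inf c (SUP x. D x)" by simp
  also have "\<dots> = (SUP x. inf c (D x))" by (rule fl_dist[OF F])
  finally show "c = (SUP x. inf c (D x))" .
qed auto

lemma sigma_Sup:
  assumes F: "frame_law TYPE('l::complete_lattice)" and S: "S \<subseteq> sigma_L (e::'a\<Rightarrow>'a\<Rightarrow>'l)"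
  shows "Sup S \<in> sigma_L e"
  unfolding sigma_L_def
proof (safe)
  fix x y
  have "inf (Sup S x) (e x y) = (SUP A\<in>S. inf (A x) (e x y))"
    by (simp add: Sup_apply fl_dist2[OF F])
  also have "\<dots> \<le> (SUP A\<in>S. A y)"
  proof (rule SUP_mono)
    fix A assume "A \<in> S"
    then show "\<exists>B\<in>S. inf (A x) (e x y) \<le> B y" using S unfolding sigma_L_def by blast
  qed
  finally show "inf (Sup S x) (e x y) \<le> Sup S y" by (simp add: Sup_apply)
next
  fix D assume D: "ldirected e D"
  have "Sup S (lsup e D) = (SUP A\<in>S. A (lsup e D))" by (simp add: Sup_apply)
  also have "\<dots> = (SUP A\<in>S. SUP x. inf (A x) (D x))"
    using S D unfolding sigma_L_def by (intro SUP_cong) auto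
  also have "\<dots> = (SUP x. SUP A\<in>S. inf (A x) (D x))" by (rule SUP_commute)
  also have "\<dots> = (SUP x. inf (Sup S x) (D x))"
    by (simp add: Sup_apply fl_dist2[OF F])
  finally show "Sup S (lsup e D) = (SUP x. inf (Sup S x) (D x))" .
qed

lemma sigma_inf:
  assumes F: "frame_law TYPE('l::complete_lattice)" and A: "A \<in> sigma_L (e::'a\<Rightarrow>'a\<Rightarrow>'l)"
    and B: "B \<in> sigma_L e"
  shows "inf A B \<in> sigma_L e"
  unfolding sigma_L_def
proof (safe)
  have uA: "\<And>x y. inf (A x) (e x y) \<le> A y" using A unfolding sigma_L_def by blast
  have uB: "\<And>x y. inf (B x) (e x y) \<le> B y" using B unfolding sigma_L_def by blast
  {
  fix x y
  show "inf ((inf A B) x) (e x y) \<le> (inf A B) y"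
    using uA[of x y] uB[of x y] by (simp add: le_inf_iff) (meson inf_le1 inf_le2 le_infI order_trans)
  }
  fix D assume D: "ldirected e D"
  let ?s = "lsup e D"
  have sA: "A ?s = (SUP x. inf (A x) (D x))" using A D unfolding sigma_L_def by blast
  have sB: "B ?s = (SUP x. inf (B x) (D x))" using B D unfolding sigma_L_def by blast
  have dir: "\<And>x y. inf (D x) (D y) \<le> (SUP z. inf (inf (D z) (e x z)) (e y z))"
    using D unfolding ldirected_def by blast
  have "inf (A ?s) (B ?s) = (SUP x. SUP y. inf (inf (A x) (D x)) (inf (B y) (D y)))"
    unfolding sA sB by (simp add: fl_dist2[OF F] fl_dist[OF F]) (rule SUP_commute)
  also have "\<dots> \<le> (SUP z. inf (inf (A z) (B z)) (D z))"
  proof (intro SUP_least)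
    fix x y
    let ?t = "inf (A x) (B y)"
    have "inf (inf (A x) (D x)) (inf (B y) (D y)) \<le> inf ?t (inf (D x) (D y))"
      by (simp add: le_inf_iff) (meson inf_le1 inf_le2 order_trans)
    also have "\<dots> \<le> inf ?t (SUP z. inf (inf (D z) (e x z)) (e y z))"
      using dir[of x y] by (meson inf_mono order_refl)
    also have "\<dots> = (SUP z. inf ?t (inf (inf (D z) (e x z)) (e y z)))" by (rule fl_dist[OF F])
    also have "\<dots> \<le> (SUP z. inf (inf (A z) (B z)) (D z))"
    proof (rule SUP_mono)
      fix z
      have "inf ?t (inf (inf (D z) (e x z)) (e y z)) \<le> inf (inf (A z) (B z)) (D z)"
        using uA[of x z] uB[of y z] by (simp add: le_inf_iff) (meson inf_le1 inf_le2 le_infI order_trans)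
      then show "\<exists>m\<in>UNIV. inf ?t (inf (inf (D z) (e x z)) (e y z)) \<le> inf (inf (A m) (B m)) (D m)" by blast
    qed
    finally show "inf (inf (A x) (D x)) (inf (B y) (D y)) \<le> (SUP z. inf (inf (A z) (B z)) (D z))" .
  qed
  finally have le1: "inf (A ?s) (B ?s) \<le> (SUP z. inf (inf (A z) (B z)) (D z))" .
  have le2: "(SUP z. inf (inf (A z) (B z)) (D z)) \<le> inf (A ?s) (B ?s)"
    unfolding sA sB by (intro le_infI SUP_mono) (meson UNIV_I inf_le1 inf_le2 inf_mono order_refl)+
  show "(inf A B) ?s = (SUP x. inf ((inf A B) x) (D x))"
    using le1 le2 by simp
qed


lemma up_sigma:
  assumes F: "frame_law TYPE('l::complete_lattice)" and P: "L_dcpo (e::'a\<Rightarrow>'a\<Rightarrow>'l)"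
    and K: "lcompact e k"
  shows "(\<lambda>x. e k x) \<in> sigma_L e"
  unfolding sigma_L_def
proof (safe)
  have O: "L_order e" using P unfolding L_dcpo_def by blast
  show "\<And>x y. inf (e k x) (e x y) \<le> e k y" using O by (rule ord_trans)
  fix D assume D: "ldirected e D"
  obtain s where S: "is_lsup e D s" and Ss: "lsup e D = s" using dir_lsup[OF P D] by blast
  have Dle: "\<And>x. D x \<le> e x s" using lsup_le[OF F O S] .
  have dir: "\<And>x y. inf (D x) (D y) \<le> (SUP z. inf (inf (D z) (e x z)) (e y z))"
    using D unfolding ldirected_def by blast
  have ne: "(SUP x. D x) = top" using D unfolding ldirected_def by (simp add: nonempty_top)
  have ge: "(SUP x. inf (e k x) (D x)) \<le> e k s"
  proof (rule SUP_least)
    fix x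
    have "inf (e k x) (D x) \<le> inf (e k x) (e x s)" using Dle[of x] by (meson inf_mono order_refl)
    then show "inf (e k x) (D x) \<le> e k s" using ord_trans[OF O, of k x s] by (rule order_trans)
  qed
  define I where "I = (\<lambda>y. SUP x. inf (D x) (e y x))"
  have DI: "D x \<le> I x" for x
    unfolding I_def using SUP_upper[of x UNIV "\<lambda>a. inf (D a) (e x a)"] by (simp add: ord_refl[OF O])
  have low: "llower e I" unfolding llower_def
  proof (intro allI)
    fix x y
    have "inf (I x) (e y x) = (SUP a. inf (inf (D a) (e x a)) (e y x))"
      unfolding I_def by (rule fl_dist2[OF F])
    also have "\<dots> \<le> I y" unfolding I_def
    proof (rule SUP_mono)
      fix a
      have "inf (inf (D a) (e x a)) (e y x) \<le> inf (D a) (e y a)"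
        using ord_trans[OF O, of y x a] by (simp add: le_inf_iff) (meson inf_le1 inf_le2 le_infI order_trans)
      then show "\<exists>m\<in>UNIV. inf (inf (D a) (e x a)) (e y x) \<le> inf (D m) (e y m)" by blast
    qed
    finally show "inf (I x) (e y x) \<le> I y" .
  qed
  have dirI: "ldirected e I" unfolding ldirected_def lnonempty_def
  proof (intro conjI allI)
    have "(SUP x. D x) \<le> (SUP x. I x)" using DI by (simp add: SUP_mono')
    then show "(SUP x. I x) = top" using ne by (simp add: top_unique)
  next
    fix x y
    have "inf (I x) (I y) = (SUP a. SUP b. inf (inf (D a) (e x a)) (inf (D b) (e y b)))"
      unfolding I_def by (simp add: fl_dist2[OF F] fl_dist[OF F]) (rule SUP_commute)
    also have "\<dots> \<le> (SUP z. inf (inf (I z) (e x z)) (e y z))"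
    proof (intro SUP_least)
      fix a b
      let ?t = "inf (e x a) (e y b)"
      have "inf (inf (D a) (e x a)) (inf (D b) (e y b)) \<le> inf ?t (inf (D a) (D b))"
        by (simp add: le_inf_iff) (meson inf_le1 inf_le2 order_trans)
      also have "\<dots> \<le> inf ?t (SUP z. inf (inf (D z) (e a z)) (e b z))"
        using dir[of a b] by (meson inf_mono order_refl)
      also have "\<dots> = (SUP z. inf ?t (inf (inf (D z) (e a z)) (e b z)))" by (rule fl_dist[OF F])
      also have "\<dots> \<le> (SUP z. inf (inf (I z) (e x z)) (e y z))"
      proof (rule SUP_mono)
        fix z
        have "inf ?t (inf (inf (D z) (e a z)) (e b z)) \<le> inf (inf (I z) (e x z)) (e y z)"
          using ord_trans[OF O, of x a z] ord_trans[OF O, of y b z] DI[of z]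
          by (simp add: le_inf_iff) (meson inf_le1 inf_le2 le_infI order_trans)
        then show "\<exists>m\<in>UNIV. inf ?t (inf (inf (D z) (e a z)) (e b z)) \<le> inf (inf (I m) (e x m)) (e y m)" by blast
      qed
      finally show "inf (inf (D a) (e x a)) (inf (D b) (e y b)) \<le> (SUP z. inf (inf (I z) (e x z)) (e y z))" .
    qed
    finally show "inf (I x) (I y) \<le> (SUP z. inf (inf (I z) (e x z)) (e y z))" .
  qed
  have SI: "is_lsup e I s" unfolding is_lsup_def
  proof
    fix y
    have "lsub D (ldown e y) \<le> lsub I (ldown e y)"
      unfolding lsub_ge[OF F]
    proof
      fix x
      have "inf (lsub D (ldown e y)) (I x) = (SUP a. inf (lsub D (ldown e y)) (inf (D a) (e x a)))"
        unfolding I_def by (rule fl_dist[OF F])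
      also have "\<dots> \<le> e x y"
      proof (rule SUP_least)
        fix a
        have "inf (lsub D (ldown e y)) (D a) \<le> e a y" using lsub_le[OF F, of D "ldown e y" a]
          by (simp add: ldown_def)
        then show "inf (lsub D (ldown e y)) (inf (D a) (e x a)) \<le> e x y"
        proof -
          have h1: "inf (lsub D (ldown e y)) (inf (D a) (e x a)) \<le> e x a"
            by (meson inf_le2 order_trans)
          have "inf (lsub D (ldown e y)) (inf (D a) (e x a)) \<le> inf (lsub D (ldown e y)) (D a)"
            by (meson inf_le1 inf_mono order_refl)
          with \<open>inf (lsub D (ldown e y)) (D a) \<le> e a y\<close> have h2: "inf (lsub D (ldown e y)) (inf (D a) (e x a)) \<le> e a y"
            by (meson order_trans)
          from h1 h2 have "inf (lsub D (ldown e y)) (inf (D a) (e x a)) \<le> inf (e x a) (e a y)"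
            by (rule le_infI)
          then show ?thesis using ord_trans[OF O, of x a y] by (rule order_trans)
        qed
      qed
      finally show "inf (lsub D (ldown e y)) (I x) \<le> ldown e y x" by (simp add: ldown_def)
    qed
    moreover have "lsub I (ldown e y) \<le> lsub D (ldown e y)"
      unfolding lsub_ge[OF F]
    proof
      fix x
      have "inf (lsub I (ldown e y)) (D x) \<le> inf (lsub I (ldown e y)) (I x)"
        using DI[of x] by (meson inf_mono order_refl)
      then show "inf (lsub I (ldown e y)) (D x) \<le> ldown e y x"
        using lsub_le[OF F, of I "ldown e y" x] by (rule order_trans)
    qed
    moreover have "e s y = lsub D (ldown e y)" using S unfolding is_lsup_def by blast
    ultimately show "e s y = lsub I (ldown e y)" by simp
  qed
  have "lsup e I = s" using lsup_eq[OF O SI] .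
  moreover have "lideal e I" unfolding lideal_def using dirI low by blast
  ultimately have "top \<le> limp (e k s) (I k)"
    using K SI unfolding lcompact_def way_below_def by (metis (mono_tags, lifting) CollectI Inf_lower)
  then have "e k s \<le> I k" using limp_iff[OF F] by (metis inf_top_left)
  also have "\<dots> = (SUP x. inf (e k x) (D x))" unfolding I_def by (simp add: inf_commute)
  finally show "e k (lsup e D) = (SUP x. inf (e k x) (D x))" using ge Ss by simp
qed

lemma lsub_up:
  assumes F: "frame_law TYPE('l::complete_lattice)" and O: "L_order (e::'a\<Rightarrow>'a\<Rightarrow>'l)"
    and V: "\<And>x y. inf (V x) (e x y) \<le> V y"
  shows "lsub (\<lambda>x. e k x) V = V k"
proof (rule antisym)
  show "lsub (\<lambda>x. e k x) V \<le> V k" using lsub_le[OF F, of "\<lambda>x. e k x" V k] by (simp add: ord_refl[OF O])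
  show "V k \<le> lsub (\<lambda>x. e k x) V" unfolding lsub_ge[OF F] using V by blast
qed

lemma up_sc:
  assumes F: "frame_law TYPE('l::complete_lattice)" and P: "L_dcpo (e::'a\<Rightarrow>'a\<Rightarrow>'l)"
  shows "super_compact (sigma_L e) (\<lambda>x. e k x)"
  unfolding super_compact_def
proof (intro conjI allI impI)
  have O: "L_order e" using P unfolding L_dcpo_def by blast
  show "lnonempty (\<lambda>x. e k x)" unfolding lnonempty_def
    by (metis (mono_tags) O SUP_upper UNIV_I ord_refl top_unique)
  fix I assume I: "I \<subseteq> sigma_L e"
  have "Sup I \<in> sigma_L e" using sigma_Sup[OF F I] .
  then have "lsub (\<lambda>x. e k x) (Sup I) = Sup I k"
    by (intro lsub_up[OF F O]) (auto simp: sigma_L_def)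
  also have "\<dots> = (SUP V\<in>I. V k)" by (simp add: Sup_apply)
  also have "\<dots> = (SUP V\<in>I. lsub (\<lambda>x. e k x) V)"
    using I by (intro SUP_cong refl lsub_up[OF F O, symmetric]) (auto simp: sigma_L_def)
  finally show "lsub (\<lambda>x. e k x) (Sup I) = (SUP V\<in>I. lsub (\<lambda>x. e k x) V)" .
qed

theorem proposition5p6:
  fixes e :: "'a \<Rightarrow> 'a \<Rightarrow> 'l::complete_lattice"
  assumes "frame_law TYPE('l)"
    and "algebraic_L_dcpo e"
  shows "is_L_topology (sigma_L e) \<and> strong_locally_super_compact (sigma_L e)"
proof
  note F = assms(1)
  have P: "L_dcpo e" using assms(2) unfolding algebraic_L_dcpo_def by blast
  have O: "L_order e" using P unfolding L_dcpo_def by blast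
  show "is_L_topology (sigma_L e)" unfolding is_L_topology_def
    using sigma_inf[OF F] sigma_Sup[OF F] sigma_const[OF F] by blast
  define B where "B = (\<lambda>k. \<lambda>x. e k x) ` {k. lcompact e k}"
  have Bsub: "B \<subseteq> sigma_L e" unfolding B_def using up_sigma[OF F P] by blast
  have Bsc: "\<forall>V\<in>B. super_compact (sigma_L e) V" unfolding B_def using up_sc[OF F P] by blast
  have base: "A = (SUP V\<in>B. (\<lambda>x. inf (lsub V A) (V x)))" if A: "A \<in> sigma_L e" for A
  proof (rule ext)
    fix x
    have uA: "\<And>x y. inf (A x) (e x y) \<le> A y" using A unfolding sigma_L_def by blast
    have "(SUP V\<in>B. (\<lambda>x. inf (lsub V A) (V x))) x = (SUP k\<in>{k. lcompact e k}. inf (lsub (\<lambda>x. e k x) A) (e k x))"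
      unfolding B_def by (simp add: image_image)
    also have "\<dots> = (SUP k\<in>{k. lcompact e k}. inf (A k) (e k x))"
      using lsub_up[OF F O uA] by simp
    finally have r: "(SUP V\<in>B. (\<lambda>x. inf (lsub V A) (V x))) x = (SUP k\<in>{k. lcompact e k}. inf (A k) (e k x))" .
    have kd: "ldirected e (kset e x)" and ks: "is_lsup e (kset e x) x"
      using assms(2) unfolding algebraic_L_dcpo_def by blast+
    have "A x = A (lsup e (kset e x))" using lsup_eq[OF O ks] by simp
    also have "\<dots> = (SUP y. inf (A y) (kset e x y))" using A kd unfolding sigma_L_def by blast
    also have "\<dots> = (SUP k\<in>{k. lcompact e k}. inf (A k) (e k x))"
    proof (rule antisym)
      show "(SUP y. inf (A y) (kset e x y)) \<le> (SUP k\<in>{k. lcompact e k}. inf (A k) (e k x))"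
      proof (rule SUP_least)
        fix y show "inf (A y) (kset e x y) \<le> (SUP k\<in>{k. lcompact e k}. inf (A k) (e k x))"
          by (cases "lcompact e y") (auto simp: kset_def intro: SUP_upper)
      qed
      show "(SUP k\<in>{k. lcompact e k}. inf (A k) (e k x)) \<le> (SUP y. inf (A y) (kset e x y))"
      proof (rule SUP_least)
        fix k assume "k \<in> {k. lcompact e k}"
        then show "inf (A k) (e k x) \<le> (SUP y. inf (A y) (kset e x y))"
          using SUP_upper[of k UNIV "\<lambda>y. inf (A y) (kset e x y)"] by (simp add: kset_def)
      qed
    qed
    finally show "A x = (SUP V\<in>B. (\<lambda>x. inf (lsub V A) (V x))) x" using r by simp
  qed
  show "strong_locally_super_compact (sigma_L e)"
    unfolding strong_locally_super_compact_def is_L_base_def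
    using Bsub Bsc base by blast
qed

end
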